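(* For every $\varkappa>0$, the function $\lambda\mapsto\partial_\lambda p(\lambda,\varkappa)$ has exactly one zero $\lambda_0$ in the open interval $(-2K,0)$, and at this zero $\partial_\lambda^2p(\lambda_0,\varkappa)<0$.
   Context: Fix real $J_1<J_2<J_3$; $\rho=\tfrac12\sqrt{J_3-J_1}$, $k=\sqrt{(J_2-J_1)/(J_3-J_1)}\in(0,1)$, $K=K(k)$ the complete elliptic integral of the first kind. $w_1(\lambda)=\rho/\mathrm{sn}(\lambda,k)$, $w_2(\lambda)=\rho\,\mathrm{dn}(\lambda,k)/\mathrm{sn}(\lambda,k)$, $w_3(\lambda)=\rho\,\mathrm{cn}(\lambda,k)/\mathrm{sn}(\lambda,k)$ (Jacobi elliptic functions of modulus $k$). For real $\lambda\in(-2K,0)$ and $\varkappa>0$, $p(\lambda,\varkappa)=\varkappa w_3(\lambda)-2w_1(\lambda)w_2(\lambda)$. *)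

theory Defs
  imports "HOL-Analysis.Analysis"
begin

text \<open>Jacobi elliptic functions of modulus k (0 < k < 1), defined classically via the
amplitude: the incomplete elliptic integral of the first kind
F(phi,k) = int_0^phi dtheta / sqrt(1 - k^2 sin^2 theta) (signed),
am(., k) its inverse, sn = sin o am, cn = cos o am, dn = sqrt(1 - k^2 sn^2).\<close>

definition ellF :: "real \<Rightarrow> real \<Rightarrow> real" where
  "ellF k \<phi> =
     (if 0 \<le> \<phi> then integral {0..\<phi>} (\<lambda>\<theta>. 1 / sqrt (1 - k\<^sup>2 * (sin \<theta>)\<^sup>2))
      else - integral {\<phi>..0} (\<lambda>\<theta>. 1 / sqrt (1 - k\<^sup>2 * (sin \<theta>)\<^sup>2)))"

definition ellK :: "real \<Rightarrow> real" where
  "ellK k = ellF k (pi / 2)"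

definition jam :: "real \<Rightarrow> real \<Rightarrow> real" where
  "jam k u = (THE \<phi>. ellF k \<phi> = u)"

definition jsn :: "real \<Rightarrow> real \<Rightarrow> real" where
  "jsn k u = sin (jam k u)"

definition jcn :: "real \<Rightarrow> real \<Rightarrow> real" where
  "jcn k u = cos (jam k u)"

definition jdn :: "real \<Rightarrow> real \<Rightarrow> real" where
  "jdn k u = sqrt (1 - k\<^sup>2 * (jsn k u)\<^sup>2)"

definition rho :: "real \<Rightarrow> real \<Rightarrow> real \<Rightarrow> real" where
  "rho J1 J2 J3 = sqrt (J3 - J1) / 2"

definition modk :: "real \<Rightarrow> real \<Rightarrow> real \<Rightarrow> real" where
  "modk J1 J2 J3 = sqrt ((J2 - J1) / (J3 - J1))"

definition w1 :: "real \<Rightarrow> real \<Rightarrow> real \<Rightarrow> real \<Rightarrow> real" where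
  "w1 J1 J2 J3 l = rho J1 J2 J3 / jsn (modk J1 J2 J3) l"

definition w2 :: "real \<Rightarrow> real \<Rightarrow> real \<Rightarrow> real \<Rightarrow> real" where
  "w2 J1 J2 J3 l = rho J1 J2 J3 * jdn (modk J1 J2 J3) l / jsn (modk J1 J2 J3) l"

definition w3 :: "real \<Rightarrow> real \<Rightarrow> real \<Rightarrow> real \<Rightarrow> real" where
  "w3 J1 J2 J3 l = rho J1 J2 J3 * jcn (modk J1 J2 J3) l / jsn (modk J1 J2 J3) l"

definition pfun :: "real \<Rightarrow> real \<Rightarrow> real \<Rightarrow> real \<Rightarrow> real \<Rightarrow> real" where
  "pfun J1 J2 J3 l \<kappa> = \<kappa> * w3 J1 J2 J3 l - 2 * w1 J1 J2 J3 l * w2 J1 J2 J3 l"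

end

theory Submission
  imports Defs
begin


definition Dn :: "real \<Rightarrow> real \<Rightarrow> real" where
  "Dn k x = sqrt (1 - k\<^sup>2 * (sin x)\<^sup>2)"



lemma Dn_arg_pos: fixes k x :: real assumes "k\<^sup>2 < 1" shows "1 - k\<^sup>2 * (sin x)\<^sup>2 > 0"
proof -
  have "(sin x)\<^sup>2 \<le> 1" using sin_cos_squared_add[of x] zero_le_power2[of "cos x"] by linarith
  hence "k\<^sup>2 * (sin x)\<^sup>2 \<le> k\<^sup>2" by (simp add: mult_left_le)
  thus ?thesis using assms by linarith
qed

lemma Dn_pos: "k\<^sup>2 < 1 \<Longrightarrow> Dn k x > 0"
  unfolding Dn_def using Dn_arg_pos[of k x] by simp

lemma Dn_sq: "k\<^sup>2 < 1 \<Longrightarrow> (Dn k x)\<^sup>2 = 1 - k\<^sup>2 * (sin x)\<^sup>2"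
  unfolding Dn_def using Dn_arg_pos[of k x] by simp

lemma Dn_deriv: assumes "k\<^sup>2 < 1"
  shows "(Dn k has_real_derivative (- (k\<^sup>2 * sin x * cos x) / Dn k x)) (at x)"
proof -
  have "((\<lambda>x. sqrt (1 - k\<^sup>2 * (sin x)\<^sup>2)) has_real_derivative
     inverse (sqrt (1 - k\<^sup>2 * (sin x)\<^sup>2)) / 2 * (0 - k\<^sup>2 * (2 * sin x ^ 1 * cos x))) (at x)"
    by (rule derivative_eq_intros refl | use Dn_arg_pos[OF assms, of x] in simp)+
  moreover have "inverse (sqrt (1 - k\<^sup>2 * (sin x)\<^sup>2)) / 2 * (0 - k\<^sup>2 * (2 * sin x ^ 1 * cos x))
     = - (k\<^sup>2 * sin x * cos x) / Dn k x" unfolding Dn_def by (simp add: field_simps)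
  ultimately show ?thesis unfolding Dn_def[abs_def] by simp
qed

lemma Dn_deriv_chain[derivative_intros]:
  fixes g :: "real \<Rightarrow> real"
  assumes "k\<^sup>2 < 1" "(g has_real_derivative g') (at x within S)"
  shows "((\<lambda>x. Dn k (g x)) has_real_derivative (- (k\<^sup>2 * sin (g x) * cos (g x)) / Dn k (g x)) * g') (at x within S)"
  using DERIV_chain2[OF Dn_deriv[OF assms(1)] assms(2)] .

definition Pf :: "real \<Rightarrow> real \<Rightarrow> real \<Rightarrow> real \<Rightarrow> real" where
  "Pf k r q x = q * (r * cos x / sin x) - 2 * (r / sin x) * (r * Dn k x / sin x)"

definition Bf :: "real \<Rightarrow> real \<Rightarrow> real \<Rightarrow> real \<Rightarrow> real" where
  "Bf k r q x = 2 * r\<^sup>2 * cos x * (2 - k\<^sup>2 * (sin x)\<^sup>2) - q * r * Dn k x * sin x"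

lemma P_deriv: assumes "k\<^sup>2 < 1" "sin x \<noteq> 0"
  shows "(Pf k r q has_real_derivative Bf k r q x / ((sin x)^3 * Dn k x)) (at x)"
  unfolding Pf_def[abs_def]
  apply (rule derivative_eq_intros refl assms | simp add: assms)+
  using Dn_pos[OF assms(1), of x] Dn_sq[OF assms(1), of x] assms(2)
  apply (simp add: field_simps Bf_def)
  using sin_cos_squared_add[of x] Dn_sq[OF assms(1), of x] 
  by algebra

lemma alg_G: fixes s c D k q w :: real
  assumes "D > 0" "c \<noteq> 0" "w \<noteq> 0" "D\<^sup>2 = 1 - k\<^sup>2 * s\<^sup>2" "w = 2 - k\<^sup>2 * s\<^sup>2" "s\<^sup>2 + c\<^sup>2 = 1"
  shows "((c * (q * D) - k\<^sup>2 * s * c * q * s / D) *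
      (c * w) -
      q * D * s *
      (- (s * w) - 2 * (c * s) * k\<^sup>2 * c)) /
     (c * w * (c * w)) =
     q *
     ((1 - k\<^sup>2 * s\<^sup>2) * w -
      (k\<^sup>2 * s\<^sup>2)\<^sup>2 * c\<^sup>2) /
     (c\<^sup>2 * w\<^sup>2 * D)"
  using assms(1-3) apply (simp add: field_simps)
  using assms(4-6) by algebra

definition Gf :: "real \<Rightarrow> real \<Rightarrow> real \<Rightarrow> real" where
  "Gf k q x = q * Dn k x * sin x / (cos x * (2 - k\<^sup>2 * (sin x)\<^sup>2))"

lemma G_deriv: assumes "k\<^sup>2 < 1" "cos x \<noteq> 0"
  shows "(Gf k q has_real_derivative
     q * ((1 - k\<^sup>2 * (sin x)\<^sup>2) * (2 - k\<^sup>2 * (sin x)\<^sup>2) - (k\<^sup>2 * (sin x)\<^sup>2)\<^sup>2 * (cos x)\<^sup>2)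
      / ((cos x)\<^sup>2 * (2 - k\<^sup>2 * (sin x)\<^sup>2)\<^sup>2 * Dn k x)) (at x)"
proof -
  have u: "2 - k\<^sup>2 * (sin x)\<^sup>2 \<noteq> 0" using Dn_arg_pos[OF assms(1), of x] by simp
  have u': "k\<^sup>2 * (sin x)\<^sup>2 \<noteq> 2" using Dn_arg_pos[OF assms(1), of x] by simp
  show ?thesis
  unfolding Gf_def[abs_def]
  apply (rule derivative_eq_intros refl assms | simp add: assms u u')+
  apply (rule alg_G)
  using Dn_pos[OF assms(1), of x] Dn_sq[OF assms(1), of x] assms(2) u sin_cos_squared_add[of x]
  by auto
qed

lemma G_deriv_pos: assumes "k\<^sup>2 < 1" "cos x \<noteq> 0" "q > 0"
  shows "q * ((1 - k\<^sup>2 * (sin x)\<^sup>2) * (2 - k\<^sup>2 * (sin x)\<^sup>2) - (k\<^sup>2 * (sin x)\<^sup>2)\<^sup>2 * (cos x)\<^sup>2)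
      / ((cos x)\<^sup>2 * (2 - k\<^sup>2 * (sin x)\<^sup>2)\<^sup>2 * Dn k x) > 0"
proof -
  define u where "u = k\<^sup>2 * (sin x)\<^sup>2"
  have u0: "u \<ge> 0" unfolding u_def by simp
  have u1: "u < 1" unfolding u_def using Dn_arg_pos[OF assms(1), of x] by simp
  have "k\<^sup>2 \<le> 1" using assms(1) by simp
  hence "u \<le> (sin x)\<^sup>2" unfolding u_def using mult_right_mono[of "k\<^sup>2" 1 "(sin x)\<^sup>2"] by simp
  hence c2: "(cos x)\<^sup>2 \<le> 1 - u" using sin_cos_squared_add[of x] by linarith
  have "u\<^sup>2 \<le> 1" using u0 u1 by (simp add: power_le_one)
  have "u\<^sup>2 * (cos x)\<^sup>2 \<le> 1 * (1 - u)"
    by (rule mult_mono) (use c2 \<open>u\<^sup>2 \<le> 1\<close> u1 in auto)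
  hence "u\<^sup>2 * (cos x)\<^sup>2 \<le> 1 - u" by simp
  moreover have "(1 - u) * (2 - u) - (1 - u) > 0"
  proof -
    have "(1 - u) * (2 - u) - (1 - u) = (1 - u) * (1 - u)" by algebra
    thus ?thesis using u1 by simp
  qed
  ultimately have num: "(1 - u) * (2 - u) - u\<^sup>2 * (cos x)\<^sup>2 > 0" by linarith
  have den: "(cos x)\<^sup>2 * (2 - u)\<^sup>2 * Dn k x > 0"
    using assms(2) u1 Dn_pos[OF assms(1), of x] by simp
  show ?thesis using num den assms(3) unfolding u_def[symmetric] by simp
qed

lemma B_factor: assumes "k\<^sup>2 < 1" "cos x \<noteq> 0"
  shows "Bf k r q x = r * cos x * (2 - k\<^sup>2 * (sin x)\<^sup>2) * (2 * r - Gf k q x)"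
proof -
  have u: "2 - k\<^sup>2 * (sin x)\<^sup>2 \<noteq> 0" using Dn_arg_pos[OF assms(1), of x] by simp
  show ?thesis unfolding Bf_def Gf_def using u assms(2) by (simp add: field_simps power2_eq_square)
qed

lemma B_pos_right: assumes "k\<^sup>2 < 1" "r > 0" "q > 0" "sin x < 0" "cos x \<ge> 0"
  shows "Bf k r q x > 0"
proof -
  have u: "2 - k\<^sup>2 * (sin x)\<^sup>2 > 0" using Dn_arg_pos[OF assms(1), of x] by simp
  have "2 * r\<^sup>2 * cos x * (2 - k\<^sup>2 * (sin x)\<^sup>2) \<ge> 0" using u assms by simp
  moreover have "q * r * Dn k x * sin x < 0" using assms Dn_pos[OF assms(1), of x]
    by (simp add: mult_pos_neg)
  ultimately show ?thesis unfolding Bf_def by linarith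
qed

lemma isCont_Dn: "k\<^sup>2 < 1 \<Longrightarrow> isCont (Dn k) x"
  using Dn_deriv DERIV_isCont by blast

lemma isCont_B: "k\<^sup>2 < 1 \<Longrightarrow> isCont (Bf k r q) x"
  unfolding Bf_def[abs_def] by (intro continuous_intros isCont_Dn)

lemma sin_neg_lt: "-pi < x \<Longrightarrow> x < 0 \<Longrightarrow> sin x < 0"
  using sin_gt_zero[of "-x"] by simp

lemma cos_left_lt: "-pi < x \<Longrightarrow> x < -(pi/2) \<Longrightarrow> cos x < 0"
  using cos_gt_zero[of "x + pi"] by simp

lemma cos_right_ge: "-(pi/2) \<le> x \<Longrightarrow> x < 0 \<Longrightarrow> cos x \<ge> 0"
  using cos_ge_zero[of x] by simp

lemma B_zero_G: assumes "k\<^sup>2 < 1" "r > 0" "-pi < x" "x < -(pi/2)" "Bf k r q x = 0"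
  shows "Gf k q x = 2 * r"
proof -
  have c: "cos x < 0" using cos_left_lt assms by simp
  have u: "2 - k\<^sup>2 * (sin x)\<^sup>2 > 0" using Dn_arg_pos[OF assms(1), of x] by simp
  have "r * cos x * (2 - k\<^sup>2 * (sin x)\<^sup>2) * (2 * r - Gf k q x) = 0"
    using B_factor[OF assms(1), of x r q] c assms(5) by simp
  moreover have "r * cos x * (2 - k\<^sup>2 * (sin x)\<^sup>2) \<noteq> 0" using c u assms(2) by simp
  ultimately show ?thesis by simp
qed

lemma G_mono: assumes "k\<^sup>2 < 1" "q > 0" "-pi < a" "a < b" "b < -(pi/2)"
  shows "Gf k q a < Gf k q b"
proof (rule DERIV_pos_imp_increasing[OF assms(4)])
  fix x assume x: "a \<le> x" "x \<le> b"
  have c: "cos x \<noteq> 0" using cos_left_lt[of x] x assms by simp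
  show "\<exists>y. DERIV (Gf k q) x :> y \<and> y > 0"
    using G_deriv[OF assms(1) c, of q] G_deriv_pos[OF assms(1) c assms(2)] by blast
qed

lemma div_cancel_aux: "t \<noteq> 0 \<Longrightarrow> (b * t - 0 * z) / (t * t) = b / (t::real)"
  by simp

lemma phi_main: assumes k: "k\<^sup>2 < 1" and r: "r > 0" and q: "q > 0"
  shows "\<exists>x0. -pi < x0 \<and> x0 < 0 \<and> Bf k r q x0 = 0
     \<and> (\<forall>x. -pi < x \<and> x < 0 \<and> Bf k r q x = 0 \<longrightarrow> x = x0)
     \<and> (\<exists>Q'. ((\<lambda>x. Bf k r q x / (sin x)^3) has_real_derivative Q') (at x0) \<and> Q' < 0)"
proof -
  have B1: "Bf k r q (-pi) < 0" unfolding Bf_def using r by simp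
  have B2: "Bf k r q (-(pi/2)) > 0" unfolding Bf_def using r q Dn_pos[OF k, of "-(pi/2)"] by simp
  obtain x0 where x0: "-pi \<le> x0" "x0 \<le> -(pi/2)" "Bf k r q x0 = 0"
    using IVT[of "Bf k r q" "-pi" 0 "-(pi/2)"] B1 B2 isCont_B[OF k] by force
  have x0': "-pi < x0" "x0 < -(pi/2)" using x0 B1 B2 by (auto simp: order_le_less)
  have G0: "Gf k q x0 = 2 * r" using B_zero_G[OF k r x0' x0(3)] .
  have uniq: "x = x0" if x: "-pi < x" "x < 0" "Bf k r q x = 0" for x
  proof -
    have "x < -(pi/2)"
    proof (rule ccontr)
      assume "\<not> x < -(pi/2)"
      hence "Bf k r q x > 0" using B_pos_right[OF k r q sin_neg_lt[OF x(1,2)] cos_right_ge] x by simp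
      thus False using x by simp
    qed
    hence Gx: "Gf k q x = 2 * r" using B_zero_G[OF k r x(1) _ x(3)] by simp
    show ?thesis
    proof (rule ccontr)
      assume "x \<noteq> x0"
      hence "x < x0 \<or> x0 < x" by auto
      thus False using G_mono[OF k q, of x x0] G_mono[OF k q, of x0 x] Gx G0 x0' x \<open>x < -(pi/2)\<close> by auto
    qed
  qed
  have c0: "cos x0 < 0" using cos_left_lt x0' by simp
  have s0: "sin x0 < 0" using sin_neg_lt x0' by simp
  have u0: "2 - k\<^sup>2 * (sin x0)\<^sup>2 > 0" using Dn_arg_pos[OF k, of x0] by simp
  define G' where "G' = q * ((1 - k\<^sup>2 * (sin x0)\<^sup>2) * (2 - k\<^sup>2 * (sin x0)\<^sup>2) - (k\<^sup>2 * (sin x0)\<^sup>2)\<^sup>2 * (cos x0)\<^sup>2)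
      / ((cos x0)\<^sup>2 * (2 - k\<^sup>2 * (sin x0)\<^sup>2)\<^sup>2 * Dn k x0)"
  have dG: "(Gf k q has_real_derivative G') (at x0)" unfolding G'_def using G_deriv[OF k] c0 by simp
  have G'pos: "G' > 0" unfolding G'_def using G_deriv_pos[OF k _ q] c0 by simp
  have "((\<lambda>x. r * cos x * (2 - k\<^sup>2 * (sin x)\<^sup>2)) has_real_derivative
     r * (- sin x0) * (2 - k\<^sup>2 * (sin x0)\<^sup>2) + r * cos x0 * (- (k\<^sup>2 * (2 * sin x0 * cos x0)))) (at x0)"
    by (auto intro!: derivative_eq_intros simp: algebra_simps power2_eq_square)
  then obtain H' where dH: "((\<lambda>x. r * cos x * (2 - k\<^sup>2 * (sin x)\<^sup>2)) has_real_derivative H') (at x0)"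
    by blast
  have dprod: "((\<lambda>x. r * cos x * (2 - k\<^sup>2 * (sin x)\<^sup>2) * (2 * r - Gf k q x)) has_real_derivative
      H' * (2 * r - Gf k q x0) + (0 - G') * (r * cos x0 * (2 - k\<^sup>2 * (sin x0)\<^sup>2))) (at x0)"
    using DERIV_mult[OF dH DERIV_diff[OF DERIV_const dG]] by simp
  have dB: "(Bf k r q has_real_derivative - (r * cos x0 * (2 - k\<^sup>2 * (sin x0)\<^sup>2) * G')) (at x0)"
  proof (rule has_field_derivative_transform_within_open[OF _ _ _ ])
    show "((\<lambda>x. r * cos x * (2 - k\<^sup>2 * (sin x)\<^sup>2) * (2 * r - Gf k q x)) has_real_derivative
       - (r * cos x0 * (2 - k\<^sup>2 * (sin x0)\<^sup>2) * G')) (at x0)"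
      using dprod G0 by (simp add: mult_ac)
    show "open {-pi<..<-(pi/2)}" by simp
    show "x0 \<in> {-pi<..<-(pi/2)}" using x0' by simp
    fix x assume "x \<in> {-pi<..<-(pi/2)}"
    hence "cos x \<noteq> 0" using cos_left_lt[of x] by simp
    thus "r * cos x * (2 - k\<^sup>2 * (sin x)\<^sup>2) * (2 * r - Gf k q x) = Bf k r q x"
      using B_factor[OF k, of x r q] by simp
  qed
  define B' where "B' = - (r * cos x0 * (2 - k\<^sup>2 * (sin x0)\<^sup>2) * G')"
  have B'pos: "B' > 0" unfolding B'_def using c0 u0 G'pos r
    by (simp add: mult_neg_pos mult_pos_neg)
  have dS: "((\<lambda>x. (sin x)^3) has_real_derivative 3 * (sin x0)^2 * cos x0) (at x0)"
    by (auto intro!: derivative_eq_intros simp: power2_eq_square)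
  have s3: "(sin x0)^3 \<noteq> 0" using s0 by simp
  have dQ: "((\<lambda>x. Bf k r q x / (sin x)^3) has_real_derivative
     (B' * (sin x0)^3 - Bf k r q x0 * (3 * (sin x0)^2 * cos x0)) / ((sin x0)^3 * (sin x0)^3)) (at x0)"
    using DERIV_divide[OF dB[folded B'_def] dS s3] by (simp add: power2_eq_square)
  have Qv: "(B' * (sin x0)^3 - Bf k r q x0 * (3 * (sin x0)^2 * cos x0)) / ((sin x0)^3 * (sin x0)^3) = B' / (sin x0)^3"
    by (subst x0(3)) (rule div_cancel_aux[OF s3])
  have s3n: "(sin x0)^3 < 0"
  proof -
    have "(sin x0)^3 = sin x0 * (sin x0)\<^sup>2" by (simp add: power3_eq_cube power2_eq_square)
    moreover have "(sin x0)\<^sup>2 > 0" using s0 by simp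
    ultimately show ?thesis using s0 mult_neg_pos by metis
  qed
  have Qneg: "B' / (sin x0)^3 < 0" using B'pos s3n by (rule divide_pos_neg)
  have dQ': "((\<lambda>x. Bf k r q x / (sin x)^3) has_real_derivative B' / (sin x0)^3) (at x0)"
    using dQ unfolding Qv .
  have ex: "\<exists>Q'. ((\<lambda>x. Bf k r q x / (sin x)^3) has_real_derivative Q') (at x0) \<and> Q' < 0"
    using dQ' Qneg by blast
  have un: "\<forall>x. -pi < x \<and> x < 0 \<and> Bf k r q x = 0 \<longrightarrow> x = x0"
    using uniq by blast
  show ?thesis
    apply (rule exI[of _ x0])
    using x0' x0(3) un ex by simp
qed



lemma integrand_eq: "(\<lambda>\<theta>. 1 / sqrt (1 - k\<^sup>2 * (sin \<theta>)\<^sup>2)) = (\<lambda>\<theta>. 1 / Dn k \<theta>)"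
  unfolding Dn_def by simp

lemma cont_ff: assumes k: "k\<^sup>2 < 1" shows "continuous_on A (\<lambda>\<theta>. 1 / Dn k \<theta>)"
proof -
  have "Dn k x \<noteq> 0" for x using Dn_pos[OF k, of x] by simp
  thus ?thesis using isCont_Dn[OF k]
    by (intro continuous_at_imp_continuous_on ballI continuous_intros) auto
qed

lemma ellF_shift: assumes k: "k\<^sup>2 < 1" and a: "a \<le> 0" "a \<le> x"
  shows "ellF k x = integral {a..x} (\<lambda>\<theta>. 1 / Dn k \<theta>) - integral {a..0} (\<lambda>\<theta>. 1 / Dn k \<theta>)"
proof -
  let ?f = "\<lambda>\<theta>. 1 / Dn k \<theta>"
  have int: "?f integrable_on {c..d}" for c d by (rule integrable_continuous_real[OF cont_ff[OF k]])
  show ?thesis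
  proof (cases "0 \<le> x")
    case True
    have "integral {a..0} ?f + integral {0..x} ?f = integral {a..x} ?f"
      by (rule Henstock_Kurzweil_Integration.integral_combine[OF a(1) True int])
    thus ?thesis using True unfolding ellF_def integrand_eq by simp
  next
    case False
    have "integral {a..x} ?f + integral {x..0} ?f = integral {a..0} ?f"
      by (rule Henstock_Kurzweil_Integration.integral_combine[OF a(2) _ int]) (use False in simp)
    thus ?thesis using False unfolding ellF_def integrand_eq by simp
  qed
qed

lemma ellF_deriv: assumes k: "k\<^sup>2 < 1"
  shows "(ellF k has_real_derivative 1 / Dn k x) (at x)"
proof -
  let ?f = "\<lambda>\<theta>. 1 / Dn k \<theta>"
  define a where "a = - \<bar>x\<bar> - 1"
  define b where "b = \<bar>x\<bar> + 1"
  have ax: "a < x" "x < b" "a \<le> 0" unfolding a_def b_def by auto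
  have "((\<lambda>u. integral {a..u} ?f) has_real_derivative ?f x) (at x within {a..b})"
    by (rule integral_has_real_derivative[OF cont_ff[OF k]]) (use ax in auto)
  hence "((\<lambda>u. integral {a..u} ?f) has_real_derivative ?f x) (at x)"
    using at_within_Icc_at[OF ax(1,2)] by simp
  hence d: "((\<lambda>u. integral {a..u} ?f - integral {a..0} ?f) has_real_derivative ?f x - 0) (at x)"
    by (intro DERIV_diff DERIV_const)
  show ?thesis
  proof (rule has_field_derivative_transform_within_open[of _ _ _ "{a<..<b}"])
    show "((\<lambda>u. integral {a..u} ?f - integral {a..0} ?f) has_real_derivative ?f x) (at x)" using d by simp
  qed (use ax ellF_shift[OF k ax(3)] in auto)
qed

lemma ellF_chain[derivative_intros]:
  fixes g :: "real \<Rightarrow> real"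
  assumes "k\<^sup>2 < 1" "(g has_real_derivative g') (at x within S)"
  shows "((\<lambda>x. ellF k (g x)) has_real_derivative (1 / Dn k (g x)) * g') (at x within S)"
  using DERIV_chain2[OF ellF_deriv[OF assms(1)] assms(2)] .

lemma Dn_le1: "k\<^sup>2 < 1 \<Longrightarrow> Dn k x \<le> 1"
  unfolding Dn_def by simp

lemma ellF_ge: assumes k: "k\<^sup>2 < 1" and xy: "x \<le> y"
  shows "y - x \<le> ellF k y - ellF k x"
proof -
  have "(\<lambda>t. ellF k t - t) x \<le> (\<lambda>t. ellF k t - t) y"
  proof (rule DERIV_nonneg_imp_nondecreasing[OF xy])
    fix t
    have "((\<lambda>t. ellF k t - t) has_real_derivative 1 / Dn k t - 1) (at t)"
      by (intro DERIV_diff ellF_deriv[OF k] DERIV_ident)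
    moreover have "1 / Dn k t - 1 \<ge> 0" using Dn_pos[OF k, of t] Dn_le1[OF k, of t] by simp
    ultimately show "\<exists>y. DERIV (\<lambda>t. ellF k t - t) t :> y \<and> y \<ge> 0" by blast
  qed
  thus ?thesis by simp
qed

lemma ellF_strict: "k\<^sup>2 < 1 \<Longrightarrow> x < y \<Longrightarrow> ellF k x < ellF k y"
  using ellF_ge[of k x y] by simp

lemma ellF_less_iff: "k\<^sup>2 < 1 \<Longrightarrow> ellF k x < ellF k y \<longleftrightarrow> x < y"
  using ellF_strict[of k x y] ellF_strict[of k y x] by (cases x y rule: linorder_cases) auto

lemma ellF_0: "ellF k 0 = 0" unfolding ellF_def by simp

lemma Dn_minus: "Dn k (-x) = Dn k x" unfolding Dn_def by simp
lemma Dn_pi_minus: "Dn k (pi - x) = Dn k x" unfolding Dn_def by simp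

lemma ellF_odd: assumes k: "k\<^sup>2 < 1" shows "ellF k (-x) = - ellF k x"
proof -
  have "\<forall>t. DERIV (\<lambda>t. ellF k (-t) + ellF k t) t :> 0"
  proof
    fix t
    have "DERIV (\<lambda>t. ellF k (-t) + ellF k t) t :> 1 / Dn k (-t) * (-1) + 1 / Dn k t"
      by (intro DERIV_add ellF_chain[OF k] ellF_deriv[OF k] derivative_intros)
    thus "DERIV (\<lambda>t. ellF k (-t) + ellF k t) t :> 0" by (simp add: Dn_minus)
  qed
  from DERIV_isconst_all[OF this, of x 0] show ?thesis by (simp add: ellF_0)
qed

lemma ellF_refl: assumes k: "k\<^sup>2 < 1" shows "ellF k (pi - x) + ellF k x = ellF k pi"
proof -
  have "\<forall>t. DERIV (\<lambda>t. ellF k (pi - t) + ellF k t) t :> 0"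
  proof
    fix t
    have "DERIV (\<lambda>t. ellF k (pi - t) + ellF k t) t :> 1 / Dn k (pi - t) * (0 - 1) + 1 / Dn k t"
      by (intro DERIV_add ellF_chain[OF k] ellF_deriv[OF k] derivative_intros)
    thus "DERIV (\<lambda>t. ellF k (pi - t) + ellF k t) t :> 0" by (simp add: Dn_pi_minus)
  qed
  from DERIV_isconst_all[OF this, of x 0] show ?thesis by (simp add: ellF_0)
qed

lemma ellF_mpi: assumes k: "k\<^sup>2 < 1" shows "ellF k (-pi) = - 2 * ellK k"
  using ellF_refl[OF k, of "pi/2"] ellF_odd[OF k, of pi] unfolding ellK_def by simp

lemma ellF_surj: assumes k: "k\<^sup>2 < 1" shows "\<exists>x. ellF k x = u"
proof -
  have "ellF k (-\<bar>u\<bar>) \<le> u" using ellF_ge[OF k, of "-\<bar>u\<bar>" 0] by (simp add: ellF_0)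
  moreover have "u \<le> ellF k \<bar>u\<bar>" using ellF_ge[OF k, of 0 "\<bar>u\<bar>"] by (simp add: ellF_0)
  moreover have "isCont (ellF k) x" for x using ellF_deriv[OF k] DERIV_isCont by blast
  ultimately show ?thesis using IVT[of "ellF k" "-\<bar>u\<bar>" u "\<bar>u\<bar>"] by auto
qed

lemma F_jam: assumes k: "k\<^sup>2 < 1" shows "ellF k (jam k u) = u"
proof -
  obtain x where x: "ellF k x = u" using ellF_surj[OF k] by blast
  have "ellF k (THE x. ellF k x = u) = u"
  proof (rule theI[of _ x])
    show "ellF k x = u" by fact
    fix y assume "ellF k y = u"
    thus "y = x" using x ellF_strict[OF k, of x y] ellF_strict[OF k, of y x]
      by (cases x y rule: linorder_cases) auto
  qed
  thus ?thesis unfolding jam_def .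
qed

lemma jam_F: assumes k: "k\<^sup>2 < 1" shows "jam k (ellF k x) = x"
proof -
  have "ellF k (jam k (ellF k x)) = ellF k x" by (rule F_jam[OF k])
  thus ?thesis using ellF_strict[OF k, of x "jam k (ellF k x)"] ellF_strict[OF k, of "jam k (ellF k x)" x]
    by (cases x "jam k (ellF k x)" rule: linorder_cases) auto
qed

lemma jam_lip: assumes k: "k\<^sup>2 < 1" shows "\<bar>jam k u - jam k v\<bar> \<le> \<bar>u - v\<bar>"
proof (cases "jam k u \<le> jam k v")
  case True
  from ellF_ge[OF k True] show ?thesis using F_jam[OF k] True by simp
next
  case False
  hence "jam k v \<le> jam k u" by simp
  from ellF_ge[OF k this] show ?thesis using F_jam[OF k] \<open>jam k v \<le> jam k u\<close> by simp
qed

lemma isCont_jam: assumes k: "k\<^sup>2 < 1" shows "isCont (jam k) u"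
proof -
  have "lipschitz_on 1 UNIV (jam k)"
    by (rule lipschitz_onI) (use jam_lip[OF k] in \<open>auto simp: dist_real_def\<close>)
  hence "continuous_on UNIV (jam k)" by (rule lipschitz_on_continuous_on)
  thus ?thesis by (simp add: continuous_on_eq_continuous_at)
qed

lemma jam_deriv: assumes k: "k\<^sup>2 < 1" shows "(jam k has_real_derivative Dn k (jam k u)) (at u)"
proof -
  have "(jam k has_real_derivative inverse (1 / Dn k (jam k u))) (at u)"
    by (rule DERIV_inverse_function[where f="ellF k" and g="jam k" and a="u - 1" and b="u + 1"])
       (use ellF_deriv[OF k] Dn_pos[OF k, of "jam k u"] F_jam[OF k] isCont_jam[OF k] in auto)
  thus ?thesis by simp
qed



lemma int_iff_gen: assumes k: "k\<^sup>2 < 1"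
  shows "(-2 * ellK k < l \<and> l < 0) \<longleftrightarrow> (-pi < jam k l \<and> jam k l < 0)"
proof -
  have "(-2 * ellK k < l \<and> l < 0) \<longleftrightarrow> ellF k (-pi) < ellF k (jam k l) \<and> ellF k (jam k l) < ellF k 0"
    unfolding F_jam[OF k, of l] ellF_mpi[OF k] ellF_0 by simp
  also have "\<dots> \<longleftrightarrow> (-pi < jam k l \<and> jam k l < 0)"
    unfolding ellF_less_iff[OF k] ..
  finally show ?thesis .
qed

lemma dp_gen: assumes k: "k\<^sup>2 < 1" and l: "-pi < jam k l" "jam k l < 0"
  shows "((\<lambda>l. Pf k r q (jam k l)) has_real_derivative Bf k r q (jam k l) / (sin (jam k l))^3) (at l)"
proof -
  have s: "sin (jam k l) \<noteq> 0" using sin_neg_lt[OF l] by simp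
  have D: "Dn k (jam k l) \<noteq> 0" using Dn_pos[OF k, of "jam k l"] by simp
  have "((\<lambda>l. Pf k r q (jam k l)) has_real_derivative
        Bf k r q (jam k l) / ((sin (jam k l))^3 * Dn k (jam k l)) * Dn k (jam k l)) (at l)"
    by (rule DERIV_chain2[OF P_deriv[OF k s] jam_deriv[OF k]])
  moreover have "Bf k r q (jam k l) / ((sin (jam k l))^3 * Dn k (jam k l)) * Dn k (jam k l)
     = Bf k r q (jam k l) / (sin (jam k l))^3" using D by simp
  ultimately show ?thesis by simp
qed

lemma main_gen: assumes k: "k\<^sup>2 < 1" and r: "r > 0" and q: "q > 0"
  defines "S \<equiv> {-2 * ellK k<..<0}"
  shows "\<exists>l0. l0 \<in> S \<and> deriv (\<lambda>l. Pf k r q (jam k l)) l0 = 0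
      \<and> (\<forall>l\<in>S. deriv (\<lambda>l. Pf k r q (jam k l)) l = 0 \<longrightarrow> l = l0)
      \<and> deriv (deriv (\<lambda>l. Pf k r q (jam k l))) l0 < 0"
proof -
  define p where "p = (\<lambda>l. Pf k r q (jam k l))"
  have int_iff: "l \<in> S \<longleftrightarrow> -pi < jam k l \<and> jam k l < 0" for l
    unfolding S_def using int_iff_gen[OF k, of l] by simp
  have derp: "deriv p l = Bf k r q (jam k l) / (sin (jam k l))^3" if "l \<in> S" for l
  proof -
    have j: "-pi < jam k l" "jam k l < 0" using int_iff[of l] that by simp_all
    show ?thesis unfolding p_def by (rule DERIV_imp_deriv[OF dp_gen[OF k j]])
  qed
  obtain x0 where H: "-pi < x0 \<and> x0 < 0 \<and> Bf k r q x0 = 0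
     \<and> (\<forall>x. -pi < x \<and> x < 0 \<and> Bf k r q x = 0 \<longrightarrow> x = x0)
     \<and> (\<exists>Q'. ((\<lambda>x. Bf k r q x / (sin x)^3) has_real_derivative Q') (at x0) \<and> Q' < 0)"
    using phi_main[OF k r q] by (elim exE) (rule that)
  have x0: "-pi < x0" "x0 < 0" "Bf k r q x0 = 0" using H by simp_all
  have uniq: "\<And>x. -pi < x \<Longrightarrow> x < 0 \<Longrightarrow> Bf k r q x = 0 \<Longrightarrow> x = x0" using H by simp
  obtain Q' where dQ: "((\<lambda>x. Bf k r q x / (sin x)^3) has_real_derivative Q') (at x0)" and Qneg: "Q' < 0"
    using H by blast
  define l0 where "l0 = ellF k x0"
  have jl0: "jam k l0 = x0" unfolding l0_def by (rule jam_F[OF k])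
  have l0I: "l0 \<in> S" using int_iff[of l0] jl0 x0 by simp
  have "deriv p l0 = 0" using derp[OF l0I] jl0 x0(3) by simp
  moreover have "\<forall>l\<in>S. deriv p l = 0 \<longrightarrow> l = l0"
  proof (intro ballI impI)
    fix l assume l: "l \<in> S" and d0: "deriv p l = 0"
    have j: "-pi < jam k l" "jam k l < 0" using int_iff[of l] l by simp_all
    have s: "sin (jam k l) \<noteq> 0" using sin_neg_lt[OF j] by simp
    have "Bf k r q (jam k l) / (sin (jam k l))^3 = 0" using d0 derp[OF l] by simp
    hence "Bf k r q (jam k l) = 0" using s by simp
    hence "jam k l = x0" using uniq j by simp
    thus "l = l0" unfolding l0_def using F_jam[OF k, of l] by simp
  qed
  moreover have "deriv (deriv p) l0 < 0"
  proof -
    have d1: "((\<lambda>l. Bf k r q (jam k l) / (sin (jam k l))^3) has_real_derivative Q' * Dn k (jam k l0)) (at l0)"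
      using DERIV_chain2[of "\<lambda>x. Bf k r q x / (sin x)^3" Q' "jam k" l0, OF _ jam_deriv[OF k]] dQ jl0
      by simp
    have "(deriv p has_real_derivative Q' * Dn k (jam k l0)) (at l0)"
    proof (rule has_field_derivative_transform_within_open[OF d1])
      show "open S" unfolding S_def by simp
      show "l0 \<in> S" by (rule l0I)
      fix l assume "l \<in> S"
      thus "Bf k r q (jam k l) / (sin (jam k l))^3 = deriv p l" using derp by simp
    qed
    hence "deriv (deriv p) l0 = Q' * Dn k (jam k l0)" by (rule DERIV_imp_deriv)
    thus ?thesis using Qneg Dn_pos[OF k, of "jam k l0"] by (simp add: mult_neg_pos)
  qed
  ultimately show ?thesis unfolding p_def[symmetric] using l0I by blast
qed

theorem mainTheorem11:
  fixes J1 J2 J3 \<kappa> :: real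
  assumes "J1 < J2" and "J2 < J3" and "\<kappa> > 0"
  defines "K \<equiv> ellK (modk J1 J2 J3)"
  shows "\<exists>l0. l0 \<in> {-2*K<..<0}
           \<and> deriv (\<lambda>l. pfun J1 J2 J3 l \<kappa>) l0 = 0
           \<and> (\<forall>l\<in>{-2*K<..<0}. deriv (\<lambda>l. pfun J1 J2 J3 l \<kappa>) l = 0 \<longrightarrow> l = l0)
           \<and> deriv (deriv (\<lambda>l. pfun J1 J2 J3 l \<kappa>)) l0 < 0"
proof -
  define k where "k = modk J1 J2 J3"
  define r where "r = rho J1 J2 J3"
  have k: "k\<^sup>2 < 1" unfolding k_def modk_def using assms(1,2) by (simp add: divide_less_eq)
  have r: "r > 0" unfolding r_def rho_def using assms(1,2) by simp
  have p_eq: "(\<lambda>l. pfun J1 J2 J3 l \<kappa>) = (\<lambda>l. Pf k r \<kappa> (jam k l))"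
    unfolding pfun_def w1_def w2_def w3_def jsn_def jcn_def jdn_def Pf_def Dn_def k_def r_def
    by simp
  have KK: "K = ellK k" unfolding K_def k_def ..
  show ?thesis unfolding p_eq KK by (rule main_gen[OF k r assms(3)])
qed


end
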